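(* Let $X \subseteq \mathrm{VF}^n\times\mathrm{VF}^m$ and $\bar a\in\mathrm{VF}^n$. Let $L_1, L_2 \subseteq \mathrm{VF}^m$ be two minimal limit sets of $X$ at $\bar a$, and let $\overline{L}_1, \overline{L}_2$ be their topological closures. Then $\overline{L}_1 = \overline{L}_2$.
   Context: $\mathrm{VF}$ is an algebraically closed valued field with value group $\Gamma$, valuation $v$, and the valuation topology. For $\bar b\in\mathrm{VF}^k$, $\epsilon\in\Gamma$, $\mathfrak{o}(\bar b,\epsilon)=\{\bar c: v(c_i-b_i)>\epsilon\text{ for all }i\}$. For $X\subseteq \mathrm{VF}^n\times\mathrm{VF}^m$, write $\mathrm{pr}_{\le n}X$ for its projection to $\mathrm{VF}^n$ and $\mathrm{fib}(X,\bar c)=\{\bar d:(\bar c,\bar d)\in X\}$. A set $L\subseteq\mathrm{VF}^m$ is a limit set of $X$ at $\bar a\in\mathrm{VF}^n$ if for every $\epsilon\in\Gamma$ there is $\delta\in\Gamma$ such that whenever $\bar c\in\mathfrak{o}(\bar a,\delta)\cap(\mathrm{pr}_{\le n}X\setminus\{\bar a\})$, we have $\mathrm{fib}(X,\bar c)\subseteq\bigcup_{\bar b\in L'}\mathfrak{o}(\bar b,\epsilon)$ for some $L'\subseteq L$. A limit set $L$ of $X$ at $\bar a$ is minimal if no proper subset of $L$ is a limit set of $X$ at $\bar a$. *)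

theory Defs
  imports "HOL-Computational_Algebra.Polynomial"
begin

text \<open>A valuation v on a field K with value group Gamma (a linearly ordered abelian
  group): v is defined on nonzero elements (its value at 0 is irrelevant and never
  used; v(0) is treated as +infinity), multiplicative-to-additive, ultrametric,
  and surjective from the nonzero elements onto Gamma.\<close>
definition valuation :: "('k::field \<Rightarrow> 'g::linordered_ab_group_add) \<Rightarrow> bool" where
  "valuation v \<longleftrightarrow>
     (\<forall>x y. x \<noteq> 0 \<longrightarrow> y \<noteq> 0 \<longrightarrow> v (x * y) = v x + v y) \<and>
     (\<forall>x y. x \<noteq> 0 \<longrightarrow> y \<noteq> 0 \<longrightarrow> x + y \<noteq> 0 \<longrightarrow> min (v x) (v y) \<le> v (x + y)) \<and>
     (\<forall>g. \<exists>x. x \<noteq> 0 \<and> v x = g)"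

definition alg_closed_field :: "'k::field itself \<Rightarrow> bool" where
  "alg_closed_field _ \<longleftrightarrow> (\<forall>p :: 'k poly. 0 < degree p \<longrightarrow> (\<exists>x. poly p x = 0))"

text \<open>v(x) > eps, with the convention v(0) = +infinity.\<close>
definition val_gt :: "('k::field \<Rightarrow> 'g::linordered_ab_group_add) \<Rightarrow> 'k \<Rightarrow> 'g \<Rightarrow> bool" where
  "val_gt v x eps \<longleftrightarrow> x = 0 \<or> eps < v x"

definition vball :: "('k::field \<Rightarrow> 'g::linordered_ab_group_add) \<Rightarrow> 'k list \<Rightarrow> 'g \<Rightarrow> 'k list set" where
  "vball v b eps = {c. length c = length b \<and> (\<forall>i<length b. val_gt v (c ! i - b ! i) eps)}"

definition tuples :: "nat \<Rightarrow> 'k list set" where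
  "tuples k = {c. length c = k}"

definition pr_le :: "('k list \<times> 'k list) set \<Rightarrow> 'k list set" where
  "pr_le X = fst ` X"

definition fib :: "('k list \<times> 'k list) set \<Rightarrow> 'k list \<Rightarrow> 'k list set" where
  "fib X c = {d. (c, d) \<in> X}"

definition is_limit_set ::
  "('k::field \<Rightarrow> 'g::linordered_ab_group_add) \<Rightarrow> nat \<Rightarrow> ('k list \<times> 'k list) set
     \<Rightarrow> 'k list \<Rightarrow> 'k list set \<Rightarrow> bool" where
  "is_limit_set v m X a L \<longleftrightarrow> L \<subseteq> tuples m \<and>
     (\<forall>eps. \<exists>delta. \<forall>c \<in> vball v a delta \<inter> (pr_le X - {a}).
        \<exists>L' \<subseteq> L. fib X c \<subseteq> (\<Union>b\<in>L'. vball v b eps))"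

definition is_min_limit_set ::
  "('k::field \<Rightarrow> 'g::linordered_ab_group_add) \<Rightarrow> nat \<Rightarrow> ('k list \<times> 'k list) set
     \<Rightarrow> 'k list \<Rightarrow> 'k list set \<Rightarrow> bool" where
  "is_min_limit_set v m X a L \<longleftrightarrow> is_limit_set v m X a L \<and>
     (\<forall>L'. L' \<subset> L \<longrightarrow> \<not> is_limit_set v m X a L')"

text \<open>Topological closure in VF^m for the valuation (product) topology, whose
  neighbourhood basis at x consists of the balls o(x, eps).\<close>
definition vclosure :: "('k::field \<Rightarrow> 'g::linordered_ab_group_add) \<Rightarrow> nat \<Rightarrow> 'k list set \<Rightarrow> 'k list set" where
  "vclosure v m L = {x \<in> tuples m. \<forall>eps. vball v x eps \<inter> L \<noteq> {}}"

end

theory Submission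
  imports Defs
begin

lemma val_mult: assumes "valuation v" "x \<noteq> 0" "y \<noteq> 0" shows "v (x*y) = v x + v y"
  using assms unfolding valuation_def by blast

lemma val_one: assumes "valuation v" shows "v 1 = 0"
proof -
  have "v (1*1) = v 1 + v 1" using val_mult[OF assms, of 1 1] by simp
  thus ?thesis by simp
qed

lemma val_neg: assumes "valuation v" "x \<noteq> 0" shows "v (-x) = v x"
proof -
  have "v ((-1)*(-1)) = v (-1) + v (-1)" using val_mult[OF assms(1), of "-1" "-1"] by simp
  hence h: "v (-1) + v (-1) = 0" using val_one[OF assms(1)] by simp
  have "v (-1) = 0"
  proof (rule ccontr)
    assume "v (-1) \<noteq> 0"
    hence "v (-1) < 0 \<or> v (-1) > 0" by auto
    thus False using h by (metis add_neg_neg add_pos_pos less_irrefl)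
  qed
  moreover have "v ((-1) * x) = v (-1) + v x" using val_mult[OF assms(1), of "-1" x] assms(2) by simp
  ultimately show ?thesis by simp
qed

lemma val_gt_neg: assumes "valuation v" "val_gt v x e" shows "val_gt v (-x) e"
  using assms val_neg[OF assms(1), of x] unfolding val_gt_def by (cases "x = 0") auto

lemma val_gt_add: assumes "valuation v" "val_gt v x e" "val_gt v y e" shows "val_gt v (x+y) e"
proof (cases "x = 0 \<or> y = 0 \<or> x + y = 0")
  case True thus ?thesis using assms unfolding val_gt_def by auto
next
  case False
  hence "min (v x) (v y) \<le> v (x+y)" using assms(1) unfolding valuation_def by auto
  moreover have "e < v x" "e < v y" using False assms unfolding val_gt_def by auto
  hence "e < min (v x) (v y)" by simp
  ultimately show ?thesis unfolding val_gt_def by (meson less_le_trans)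
qed

lemma val_gt_mono: "e' \<le> e \<Longrightarrow> val_gt v x e \<Longrightarrow> val_gt v x e'"
  unfolding val_gt_def by auto

lemma vball_sym: assumes "valuation v" "c \<in> vball v b e" shows "b \<in> vball v c e"
proof -
  have "\<forall>i<length b. val_gt v (b ! i - c ! i) e"
  proof (intro allI impI)
    fix i assume "i < length b"
    hence "val_gt v (-(c ! i - b ! i)) e" using assms val_gt_neg unfolding vball_def by blast
    thus "val_gt v (b ! i - c ! i) e" by simp
  qed
  thus ?thesis using assms unfolding vball_def by auto
qed

lemma vball_trans: assumes "valuation v" "c \<in> vball v b e" "d \<in> vball v c e"
  shows "d \<in> vball v b e"
proof -
  have "\<forall>i<length b. val_gt v (d ! i - b ! i) e"
  proof (intro allI impI)
    fix i assume i: "i < length b"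
    have lc: "length c = length b" using assms(2) unfolding vball_def by auto
    have g1: "val_gt v (c ! i - b ! i) e" using assms(2) i unfolding vball_def by auto
    have g2: "val_gt v (d ! i - c ! i) e" using assms(3) i lc unfolding vball_def by auto
    have "val_gt v ((d ! i - c ! i) + (c ! i - b ! i)) e"
      using val_gt_add[OF assms(1) g2 g1] .
    thus "val_gt v (d ! i - b ! i) e" by simp
  qed
  thus ?thesis using assms unfolding vball_def by auto
qed

lemma vball_mono: "e' \<le> e \<Longrightarrow> c \<in> vball v b e \<Longrightarrow> c \<in> vball v b e'"
  unfolding vball_def using val_gt_mono by blast

lemma min_sub_closure:
  assumes val: "valuation v" and m1: "is_min_limit_set v m X a L1"
    and l2: "is_limit_set v m X a L2"
  shows "L1 \<subseteq> vclosure v m L2"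
proof
  fix b assume bL: "b \<in> L1"
  show "b \<in> vclosure v m L2"
  proof (rule ccontr)
    assume nb: "b \<notin> vclosure v m L2"
    have bt: "b \<in> tuples m" using bL m1 unfolding is_min_limit_set_def is_limit_set_def by auto
    then obtain e0 where e0: "vball v b e0 \<inter> L2 = {}" using nb unfolding vclosure_def by auto
    have "is_limit_set v m X a (L1 - {b})"
      unfolding is_limit_set_def
    proof (intro conjI allI)
      show "L1 - {b} \<subseteq> tuples m" using m1 unfolding is_min_limit_set_def is_limit_set_def by auto
    next
      fix eps
      define e where "e = max eps e0"
      obtain d1 where d1: "\<forall>c \<in> vball v a d1 \<inter> (pr_le X - {a}).
        \<exists>L' \<subseteq> L1. fib X c \<subseteq> (\<Union>b\<in>L'. vball v b e)"
        using m1 unfolding is_min_limit_set_def is_limit_set_def by blast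
      obtain d2 where d2: "\<forall>c \<in> vball v a d2 \<inter> (pr_le X - {a}).
        \<exists>L' \<subseteq> L2. fib X c \<subseteq> (\<Union>b\<in>L'. vball v b e)"
        using l2 unfolding is_limit_set_def by blast
      show "\<exists>delta. \<forall>c\<in>vball v a delta \<inter> (pr_le X - {a}).
              \<exists>L'\<subseteq>L1 - {b}. fib X c \<subseteq> (\<Union>b\<in>L'. vball v b eps)"
      proof (intro exI[of _ "max d1 d2"] ballI)
        fix c assume c: "c \<in> vball v a (max d1 d2) \<inter> (pr_le X - {a})"
        have ca: "c \<in> vball v a (max d1 d2)" and cx: "c \<in> pr_le X - {a}" using c by blast+
        have c1: "c \<in> vball v a d1 \<inter> (pr_le X - {a})"
          using vball_mono[OF max.cobounded1 ca] cx by blast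
        have c2: "c \<in> vball v a d2 \<inter> (pr_le X - {a})"
          using vball_mono[OF max.cobounded2 ca] cx by blast
        obtain A where A: "A \<subseteq> L1" "fib X c \<subseteq> (\<Union>b\<in>A. vball v b e)" using bspec[OF d1 c1] by blast
        obtain B where B: "B \<subseteq> L2" "fib X c \<subseteq> (\<Union>b\<in>B. vball v b e)" using bspec[OF d2 c2] by blast
        have "fib X c \<subseteq> (\<Union>b'\<in>L1 - {b}. vball v b' eps)"
        proof
          fix y assume y: "y \<in> fib X c"
          then obtain b1 where b1: "b1 \<in> A" "y \<in> vball v b1 e" using A by blast
          obtain b2 where b2: "b2 \<in> B" "y \<in> vball v b2 e" using B y by blast
          have "b1 \<noteq> b"
          proof
            assume "b1 = b"
            hence "b2 \<in> vball v b e"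
              using vball_trans[OF val b1(2) vball_sym[OF val b2(2)]] by simp
            hence "b2 \<in> vball v b e0" using vball_mono[of e0 e] unfolding e_def by simp
            thus False using e0 b2 B by auto
          qed
          moreover have "y \<in> vball v b1 eps" using vball_mono[of eps e] b1(2) unfolding e_def by simp
          ultimately show "y \<in> (\<Union>b'\<in>L1 - {b}. vball v b' eps)" using b1 A by blast
        qed
        thus "\<exists>L'\<subseteq>L1 - {b}. fib X c \<subseteq> (\<Union>b\<in>L'. vball v b eps)" by blast
      qed
    qed
    moreover have "L1 - {b} \<subset> L1" using bL by auto
    ultimately show False using m1 unfolding is_min_limit_set_def by blast
  qed
qed

lemma closure_sub:
  assumes val: "valuation v" and s: "L1 \<subseteq> vclosure v m L2"
  shows "vclosure v m L1 \<subseteq> vclosure v m L2"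
proof
  fix x assume x: "x \<in> vclosure v m L1"
  have "\<forall>eps. vball v x eps \<inter> L2 \<noteq> {}"
  proof
    fix eps
    obtain b where b: "b \<in> vball v x eps" "b \<in> L1" using x unfolding vclosure_def by auto
    obtain y where y: "y \<in> vball v b eps" "y \<in> L2" using s b(2) unfolding vclosure_def by auto
    have "y \<in> vball v x eps" using vball_trans[OF val b(1) y(1)] .
    thus "vball v x eps \<inter> L2 \<noteq> {}" using y by auto
  qed
  thus "x \<in> vclosure v m L2" using x unfolding vclosure_def by auto
qed

theorem lemma3p2:
  fixes v :: "'k::field \<Rightarrow> 'g::linordered_ab_group_add"
    and n m :: nat
    and X :: "('k list \<times> 'k list) set"
    and a :: "'k list"
    and L1 L2 :: "'k list set"
  assumes "valuation v"
    and "alg_closed_field TYPE('k)"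
    and "X \<subseteq> tuples n \<times> tuples m"
    and "a \<in> tuples n"
    and "is_min_limit_set v m X a L1"
    and "is_min_limit_set v m X a L2"
  shows "vclosure v m L1 = vclosure v m L2"
proof
  have l1: "is_limit_set v m X a L1" and l2: "is_limit_set v m X a L2"
    using assms(5,6) unfolding is_min_limit_set_def by blast+
  show "vclosure v m L1 \<subseteq> vclosure v m L2"
    by (rule closure_sub[OF assms(1) min_sub_closure[OF assms(1) assms(5) l2]])
  show "vclosure v m L2 \<subseteq> vclosure v m L1"
    by (rule closure_sub[OF assms(1) min_sub_closure[OF assms(1) assms(6) l1]])
qed

end
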